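(* Let $\Theta$ be a non-empty finite set and let $\mathcal{S}$ be a measurable subset of $\Delta(\Theta)$. Let $\pi,\pi'\in\Delta(\mathcal{S})$ be two populations with the same skill distribution, i.e. $p_\pi=p_{\pi'}$. Then: (a) There is systematic discrimination against $\pi$ if and only if $\pi' \mathrel{M} \pi$ and $\pi\neq\pi'$. (b) There is unsystematic discrimination if and only if neither $\pi \mathrel{M} \pi'$ nor $\pi' \mathrel{M} \pi$ holds. (c) There is no discrimination if and only if $\pi=\pi'$.
   Context: $\Delta(\Theta)$ denotes the set of probability distributions on $\Theta$ (a simplex in $\mathbb{R}^\Theta$, with its Borel $\sigma$-algebra); elements $s\in\Delta(\Theta)$ are called traits. A population is a probability measure $\pi\in\Delta(\mathcal{S})$ on $\mathcal{S}$. Its skill distribution is $p_\pi\in\Delta(\Theta)$, $p_\pi(\theta)=\int_{\mathcal{S}} s(\theta)\,\pi(\mathrm{d}s)$. A firm is a non-empty finite set $A\subset\mathbb{R}^\Theta$, and $v_A(s)=\max_{a\in A}\sum_{\theta\in\Theta}a(\theta)s(\theta)$ for $s\in\Delta(\Theta)$. For populations $\pi,\pi'$ with $p_\pi=p_{\pi'}$: firm $A$ discriminates against $\pi$ if $\int_{\mathcal{S}} v_A\,\mathrm{d}\pi\le\int_{\mathcal{S}} v_A\,\mathrm{d}\pi'$, and discriminates strictly against $\pi$ if the inequality is strict. There is systematic discrimination against $\pi$ if every firm discriminates against $\pi$ and some firm discriminates strictly against $\pi$. There is unsystematic discrimination if there are firms $A,A'$ such that $A$ discriminates strictly against $\pi$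 and $A'$ discriminates strictly against $\pi'$. There is no discrimination if there is neither systematic discrimination (against $\pi$ or against $\pi'$) nor unsystematic discrimination. $\pi' \mathrel{M} \pi$ ($\pi'$ is a mean-preserving spread of $\pi$) means $\int_{\mathcal{S}} h\,\mathrm{d}\pi'\ge\int_{\mathcal{S}} h\,\mathrm{d}\pi$ for every convex continuous function $h:\Delta(\Theta)\to\mathbb{R}$. *)

theory Defs
  imports "HOL-Probability.Probability"
begin

text \<open>Theta is a finite type 'a (hence non-empty). Traits are vectors in real^'a
lying in the probability simplex.\<close>

definition traits :: "(real ^ 'a::finite) set" where
  "traits = {s. (\<forall>\<theta>. 0 \<le> s $ \<theta>) \<and> (\<Sum>\<theta>\<in>UNIV. s $ \<theta>) = 1}"

definition population :: "(real ^ 'a::finite) set \<Rightarrow> (real ^ 'a) measure \<Rightarrow> bool" where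
  "population S \<pi> \<longleftrightarrow> sets \<pi> = sets (restrict_space borel S) \<and> prob_space \<pi>"

definition skill_dist :: "(real ^ 'a::finite) measure \<Rightarrow> real ^ 'a" where
  "skill_dist \<pi> = (\<chi> \<theta>. \<integral>s. s $ \<theta> \<partial>\<pi>)"

definition firm :: "(real ^ 'a::finite) set \<Rightarrow> bool" where
  "firm A \<longleftrightarrow> finite A \<and> A \<noteq> {}"

definition vA :: "(real ^ 'a::finite) set \<Rightarrow> real ^ 'a \<Rightarrow> real" where
  "vA A s = Max ((\<lambda>a. \<Sum>\<theta>\<in>UNIV. a $ \<theta> * s $ \<theta>) ` A)"

definition discriminates_against ::
  "(real ^ 'a::finite) set \<Rightarrow> (real ^ 'a) measure \<Rightarrow> (real ^ 'a) measure \<Rightarrow> bool" where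
  "discriminates_against A \<pi> \<pi>' \<longleftrightarrow> (\<integral>s. vA A s \<partial>\<pi>) \<le> (\<integral>s. vA A s \<partial>\<pi>')"

definition discriminates_strictly_against ::
  "(real ^ 'a::finite) set \<Rightarrow> (real ^ 'a) measure \<Rightarrow> (real ^ 'a) measure \<Rightarrow> bool" where
  "discriminates_strictly_against A \<pi> \<pi>' \<longleftrightarrow> (\<integral>s. vA A s \<partial>\<pi>) < (\<integral>s. vA A s \<partial>\<pi>')"

definition systematic_discrimination ::
  "(real ^ 'a::finite) measure \<Rightarrow> (real ^ 'a) measure \<Rightarrow> bool" where
  "systematic_discrimination \<pi> \<pi>' \<longleftrightarrow>
     (\<forall>A. firm A \<longrightarrow> discriminates_against A \<pi> \<pi>') \<and>
     (\<exists>A. firm A \<and> discriminates_strictly_against A \<pi> \<pi>')"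

definition unsystematic_discrimination ::
  "(real ^ 'a::finite) measure \<Rightarrow> (real ^ 'a) measure \<Rightarrow> bool" where
  "unsystematic_discrimination \<pi> \<pi>' \<longleftrightarrow>
     (\<exists>A A'. firm A \<and> firm A' \<and> discriminates_strictly_against A \<pi> \<pi>' \<and>
             discriminates_strictly_against A' \<pi>' \<pi>)"

definition no_discrimination ::
  "(real ^ 'a::finite) measure \<Rightarrow> (real ^ 'a) measure \<Rightarrow> bool" where
  "no_discrimination \<pi> \<pi>' \<longleftrightarrow>
     \<not> systematic_discrimination \<pi> \<pi>' \<and> \<not> systematic_discrimination \<pi>' \<pi> \<and>
     \<not> unsystematic_discrimination \<pi> \<pi>'"

text \<open>mps \<pi>' \<pi>: \<pi>' is a mean-preserving spread of \<pi> (\<pi>' M \<pi>).\<close>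
definition mps :: "(real ^ 'a::finite) measure \<Rightarrow> (real ^ 'a) measure \<Rightarrow> bool" where
  "mps \<pi>' \<pi> \<longleftrightarrow>
     (\<forall>h :: real ^ 'a \<Rightarrow> real. convex_on traits h \<and> continuous_on traits h \<longrightarrow>
        (\<integral>s. h s \<partial>\<pi>') \<ge> (\<integral>s. h s \<partial>\<pi>))"

end

theory Submission
  imports Defs
begin

lemma traits_convex: "convex (traits :: (real^'a::finite) set)"
  unfolding traits_def convex_def
proof (intro ballI allI impI, safe)
  fix x y :: "real^'a" and u v :: real and \<theta>
  assume "\<forall>\<theta>. 0 \<le> x $ \<theta>" "sum (($) x) UNIV = 1" "\<forall>\<theta>. 0 \<le> y $ \<theta>" "sum (($) y) UNIV = 1"
     "0 \<le> u" "0 \<le> v" "u + v = 1"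
  then show "0 \<le> (u *\<^sub>R x + v *\<^sub>R y) $ \<theta>" by simp
  show "(\<Sum>\<theta>\<in>UNIV. (u *\<^sub>R x + v *\<^sub>R y) $ \<theta>) = 1"
    using \<open>sum (($) x) UNIV = 1\<close> \<open>sum (($) y) UNIV = 1\<close> \<open>u + v = 1\<close>
    by (simp add: sum.distrib sum_distrib_left[symmetric])
qed

lemma traits_le1: "s \<in> traits \<Longrightarrow> 0 \<le> s $ \<theta> \<and> s $ \<theta> \<le> (1::real)"
proof -
  assume s: "s \<in> traits"
  then have "s $ \<theta> \<le> (\<Sum>j\<in>UNIV. s $ j)"
    unfolding traits_def by (intro member_le_sum) auto
  with s show ?thesis unfolding traits_def by auto
qed

lemma traits_closed: "closed (traits :: (real^'a::finite) set)"
proof -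
  have "traits = (\<Inter>\<theta>. {s::real^'a. 0 \<le> s $ \<theta>}) \<inter> {s. (\<Sum>\<theta>\<in>UNIV. s $ \<theta>) = 1}"
    unfolding traits_def by auto
  moreover have "closed {s::real^'a. (\<Sum>\<theta>\<in>UNIV. s $ \<theta>) = 1}"
    by (intro closed_Collect_eq continuous_intros)
  moreover have "closed {s::real^'a. 0 \<le> s $ \<theta>}" for \<theta>
    by (intro closed_Collect_le continuous_intros)
  moreover have "closed (\<Inter>\<theta>. {s::real^'a. 0 \<le> s $ \<theta>})"
    using \<open>\<And>\<theta>. closed {s::real^'a. 0 \<le> s $ \<theta>}\<close> by (intro closed_INT) auto
  ultimately show ?thesis by (metis closed_Int)
qed

lemma traits_bounded: "bounded (traits :: (real^'a::finite) set)"
proof -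
  have "traits \<subseteq> cbox (0::real^'a) (\<chi> i. 1)"
    by (auto simp: mem_box_cart dest: traits_le1)
  then show ?thesis using bounded_cbox bounded_subset by blast
qed

lemma traits_compact: "compact (traits :: (real^'a::finite) set)"
  using traits_closed traits_bounded compact_eq_bounded_closed by blast

lemma traits_ne: "(traits :: (real^'a::finite) set) \<noteq> {}"
proof -
  obtain t :: 'a where True by blast
  let ?s = "(\<chi> i. if i = t then 1 else 0) :: real^'a"
  have "?s \<in> traits" unfolding traits_def by auto
  then show ?thesis by blast
qed

lemma vA_inner: "vA A s = Max ((\<lambda>a. a \<bullet> s) ` A)"
  unfolding vA_def inner_vec_def by simp

lemma convex_on_max2:
  fixes f g :: "'a::real_vector \<Rightarrow> real"
  assumes "convex_on S f" "convex_on S g"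
  shows "convex_on S (\<lambda>x. max (f x) (g x))"
proof -
  have cS: "convex S" using assms convex_on_def by blast
  show ?thesis
  proof (rule convex_onI[OF _ cS])
    fix t :: real and x y assume t: "0 < t" "t < 1" and xy: "x \<in> S" "y \<in> S"
    have "f ((1 - t) *\<^sub>R x + t *\<^sub>R y) \<le> (1 - t) * f x + t * f y"
      using convex_onD[OF assms(1)] t xy by simp
    also have "\<dots> \<le> (1 - t) * max (f x) (g x) + t * max (f y) (g y)"
      using t by (intro add_mono mult_left_mono) auto
    finally have 1: "f ((1 - t) *\<^sub>R x + t *\<^sub>R y) \<le> \<dots>" .
    have "g ((1 - t) *\<^sub>R x + t *\<^sub>R y) \<le> (1 - t) * g x + t * g y"
      using convex_onD[OF assms(2)] t xy by simp
    also have "\<dots> \<le> (1 - t) * max (f x) (g x) + t * max (f y) (g y)"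
      using t by (intro add_mono mult_left_mono) auto
    finally show "max (f ((1 - t) *\<^sub>R x + t *\<^sub>R y)) (g ((1 - t) *\<^sub>R x + t *\<^sub>R y))
       \<le> (1 - t) * max (f x) (g x) + t * max (f y) (g y)" using 1 by simp
  qed
qed

lemma convex_on_linear_real: "convex S \<Longrightarrow> convex_on S (\<lambda>s. a \<bullet> s + (c::real))"
  by (rule convex_onI) (auto simp: inner_add_right inner_diff_right algebra_simps)

lemma convex_on_inner: "convex S \<Longrightarrow> convex_on S (\<lambda>s. a \<bullet> s)"
  using convex_on_linear_real[of S a 0] by simp

lemma vA_props:
  assumes "finite A" "A \<noteq> {}"
  shows "convex_on UNIV (vA A) \<and> continuous_on UNIV (vA A)"
  using assms
proof (induction A rule: finite_ne_induct)
  case (singleton x)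
  have "vA {x} = (\<lambda>s. x \<bullet> s)" by (simp add: vA_inner fun_eq_iff)
  then show ?case using convex_on_inner[of UNIV x] by (auto intro!: continuous_intros)
next
  case (insert x F)
  have eq: "vA (insert x F) = (\<lambda>s. max (x \<bullet> s) (vA F s))"
    using insert by (simp add: vA_inner fun_eq_iff Max_insert)
  show ?case unfolding eq using insert
    by (auto intro!: convex_on_max2 convex_on_inner continuous_intros)
qed

lemma firm_props:
  "firm A \<Longrightarrow> convex_on traits (vA A) \<and> continuous_on traits (vA A)"
  using vA_props[of A] unfolding firm_def
  by (meson continuous_on_subset convex_on_subset subset_UNIV traits_convex)


lemma one_inner_traits: "s \<in> traits \<Longrightarrow> ((\<chi> i. 1)::real^'a::finite) \<bullet> s = 1"
  unfolding traits_def inner_vec_def by simp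

lemma affine_minorant:
  fixes h :: "real^'a::finite \<Rightarrow> real"
  assumes h: "convex_on traits h" "continuous_on traits h" and e: "e > 0" and x0: "x0 \<in> traits"
  shows "\<exists>w c. (\<forall>x\<in>traits. w \<bullet> x + c < h x) \<and> h x0 - e < w \<bullet> x0 + c"
proof -
  let ?E = "epigraph traits h"
  have cE: "convex ?E" using h(1) convex_epigraph by blast
  have "?E = (traits \<times> UNIV) \<inter> (\<lambda>p. h (fst p) - snd p) -` {..0}"
    by (auto simp: epigraph_def)
  moreover have "continuous_on (traits \<times> UNIV) (\<lambda>p. h (fst p) - snd p)"
    by (intro continuous_intros continuous_on_compose2[OF h(2)]) auto
  ultimately have clE: "closed ?E"
    by (metis closed_Times closed_UNIV traits_closed closed_atMost continuous_closed_preimage)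
  have zE: "(x0, h x0 - e) \<notin> ?E" using e by (simp add: mem_epigraph)
  obtain a b where ab: "a \<bullet> (x0, h x0 - e) < b" "\<forall>p\<in>?E. a \<bullet> p > b"
    using separating_hyperplane_closed_point[OF cE clE zE] by blast
  obtain u \<alpha> where a: "a = (u, \<alpha>)" by (cases a)
  have "(x0, h x0) \<in> ?E" using x0 by (simp add: mem_epigraph)
  then have "u \<bullet> x0 + \<alpha> * h x0 > b" using ab(2) a by (auto simp: inner_Pair)
  moreover have "u \<bullet> x0 + \<alpha> * (h x0 - e) < b" using ab(1) a by (auto simp: inner_Pair)
  ultimately have "\<alpha> * e > 0" by (simp add: algebra_simps)
  then have \<alpha>: "\<alpha> > 0" using e by (simp add: zero_less_mult_iff)
  show ?thesis
  proof (intro exI conjI ballI)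
    fix x :: "real^'a" assume x: "x \<in> traits"
    then have "(x, h x) \<in> ?E" by (simp add: mem_epigraph)
    then have "u \<bullet> x + \<alpha> * h x > b" using ab(2) a by (auto simp: inner_Pair)
    then show "(- (1/\<alpha>) *\<^sub>R u) \<bullet> x + b / \<alpha> < h x"
      using \<alpha> by (simp add: field_simps)
  next
    show "h x0 - e < (- (1/\<alpha>) *\<^sub>R u) \<bullet> x0 + b / \<alpha>"
      using \<open>u \<bullet> x0 + \<alpha> * (h x0 - e) < b\<close> \<alpha> by (simp add: field_simps)
  qed
qed

lemma approx_firm:
  fixes h :: "real^'a::finite \<Rightarrow> real"
  assumes h: "convex_on traits h" "continuous_on traits h" and e: "e > 0"
  shows "\<exists>A. firm A \<and> (\<forall>s\<in>traits. h s - e < vA A s \<and> vA A s \<le> h s)"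
proof -
  have "\<forall>x0\<in>traits. \<exists>p. (\<forall>x\<in>traits. fst p \<bullet> x + snd p < h x) \<and> h x0 - e < fst p \<bullet> x0 + snd p"
    using affine_minorant[OF h e] by fastforce
  then obtain W where W: "\<And>x0. x0 \<in> traits \<Longrightarrow> (\<forall>x\<in>traits. fst (W x0) \<bullet> x + snd (W x0) < h x)
      \<and> h x0 - e < fst (W x0) \<bullet> x0 + snd (W x0)"
    by metis
  define l where "l x0 x = fst (W x0) \<bullet> x + snd (W x0)" for x0 x
  have "\<exists>V. open V \<and> V \<inter> traits = (\<lambda>x. l x0 x - h x) -` {-e<..} \<inter> traits" for x0
  proof -
    have "continuous_on traits (\<lambda>x. l x0 x - h x)"
      unfolding l_def by (intro continuous_intros h(2))
    then show ?thesis using continuous_on_open_invariant open_greaterThan by blast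
  qed
  then obtain V where V: "\<And>x0. open (V x0)"
    "\<And>x0. V x0 \<inter> traits = (\<lambda>x. l x0 x - h x) -` {-e<..} \<inter> traits"
    by metis
  have cov: "traits \<subseteq> (\<Union>x0\<in>traits. V x0)"
  proof
    fix x :: "real^'a" assume x: "x \<in> traits"
    then have "x \<in> V x" using V(2)[of x] W[OF x] by (auto simp: l_def)
    then show "x \<in> (\<Union>x0\<in>traits. V x0)" using x by blast
  qed
  obtain C where C: "C \<subseteq> traits" "finite C" "traits \<subseteq> (\<Union>x0\<in>C. V x0)"
    using compactE_image[OF traits_compact V(1) cov] by metis
  have Cne: "C \<noteq> {}" using C(3) traits_ne by auto
  define A where "A = (\<lambda>x0. fst (W x0) + snd (W x0) *\<^sub>R ((\<chi> i. 1)::real^'a)) ` C"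
  have firmA: "firm A" unfolding firm_def A_def using C(2) Cne by auto
  have vAeq: "vA A s = Max ((\<lambda>x0. l x0 s) ` C)" if s: "s \<in> traits" for s :: "real^'a"
  proof -
    have "(\<lambda>a. a \<bullet> s) ` A = (\<lambda>x0. l x0 s) ` C"
      unfolding A_def l_def image_image
      by (intro image_cong refl) (simp add: inner_add_left one_inner_traits[OF s])
    then show ?thesis by (simp add: vA_inner)
  qed
  show ?thesis
  proof (intro exI conjI ballI)
    show "firm A" by fact
    fix s :: "real^'a" assume s: "s \<in> traits"
    have fin: "finite ((\<lambda>x0. l x0 s) ` C)" "(\<lambda>x0. l x0 s) ` C \<noteq> {}" using C(2) Cne by auto
    have "Max ((\<lambda>x0. l x0 s) ` C) < h s"
      using fin W C(1) s by (subst Max_less_iff) (auto simp: l_def)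
    then show "vA A s \<le> h s" using vAeq[OF s] by simp
    obtain x0 where x0: "x0 \<in> C" "s \<in> V x0" using C(3) s by blast
    then have "s \<in> (\<lambda>x. l x0 x - h x) -` {-e<..} \<inter> traits" using V(2)[of x0] s by blast
    then have "h s - e < l x0 s" by simp
    also have "\<dots> \<le> Max ((\<lambda>x0. l x0 s) ` C)" using fin x0 by (intro Max_ge) auto
    finally show "h s - e < vA A s" using vAeq[OF s] by simp
  qed
qed


lemma pop_space: "population S \<pi> \<Longrightarrow> space \<pi> = S"
  unfolding population_def by (metis sets_eq_imp_space_eq space_restrict_space2 sets.top space_borel Int_UNIV_right space_restrict_space)

lemma pop_meas:
  assumes "population S \<pi>" "continuous_on S g"
  shows "(g :: real^'a::finite \<Rightarrow> real) \<in> borel_measurable \<pi>"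
proof -
  have "g \<in> borel_measurable (restrict_space borel S)"
    by (rule borel_measurable_continuous_on_restrict) fact
  then show ?thesis using assms(1) unfolding population_def
    by (metis measurable_cong_sets)
qed

lemma pop_integrable:
  assumes "population S \<pi>" "S \<subseteq> traits" "continuous_on traits g"
  shows "integrable \<pi> (g :: real^'a::finite \<Rightarrow> real)"
proof -
  have ps: "prob_space \<pi>" using assms(1) population_def by blast
  have "compact (g ` traits)" using compact_continuous_image[OF assms(3) traits_compact] .
  then obtain B where B: "\<And>x. x \<in> traits \<Longrightarrow> norm (g x) \<le> B"
    using compact_imp_bounded bounded_iff by (metis imageI)
  have m: "g \<in> borel_measurable \<pi>"
    using pop_meas[OF assms(1) continuous_on_subset[OF assms(3) assms(2)]] .
  have "AE x in \<pi>. norm (g x) \<le> B"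
    using B assms(2) pop_space[OF assms(1)] by (intro AE_I2) auto
  interpret prob_space \<pi> by fact
  from integrable_const_bound[OF \<open>AE x in \<pi>. norm (g x) \<le> B\<close> m] show ?thesis .
qed

lemma pop_int_le:
  assumes "population S \<pi>" "S \<subseteq> traits" "continuous_on traits f" "continuous_on traits g"
    and le: "\<And>s. s \<in> traits \<Longrightarrow> f s \<le> g s + e"
  shows "(\<integral>s. f s \<partial>\<pi>) \<le> (\<integral>s. (g :: real^'a::finite \<Rightarrow> real) s \<partial>\<pi>) + e"
proof -
  have ps: "prob_space \<pi>" using assms(1) population_def by blast
  have "(\<integral>s. f s \<partial>\<pi>) \<le> (\<integral>s. g s + e \<partial>\<pi>)"
    using assms pop_space[OF assms(1)]
    by (intro integral_mono pop_integrable[OF assms(1,2)] continuous_intros) auto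
  also have "\<dots> = (\<integral>s. g s \<partial>\<pi>) + e"
  proof -
    interpret prob_space \<pi> by fact
    have "integrable \<pi> (\<lambda>_. e)" by simp
    from Bochner_Integration.integral_add[OF pop_integrable[OF assms(1,2,4)] this] prob_space
    show ?thesis by simp
  qed
  finally show ?thesis .
qed

lemma firms_to_mps:
  assumes p: "population S \<pi>" and p': "population S \<pi>'" and St: "S \<subseteq> traits"
    and F: "\<And>A. firm A \<Longrightarrow> (\<integral>s. vA A s \<partial>\<pi>) \<le> (\<integral>s. vA A s \<partial>\<pi>')"
  shows "mps \<pi>' \<pi>"
  unfolding mps_def
proof (intro allI impI)
  fix h :: "real^'a \<Rightarrow> real" assume h: "convex_on traits h \<and> continuous_on traits h"
  show "(\<integral>s. h s \<partial>\<pi>) \<le> (\<integral>s. h s \<partial>\<pi>')"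
  proof (rule field_le_epsilon)
    fix e :: real assume e: "0 < e"
    obtain A where A: "firm A" "\<And>s. s \<in> traits \<Longrightarrow> h s - e < vA A s \<and> vA A s \<le> h s"
      using approx_firm[of h e] h e by blast
    have cA: "continuous_on traits (vA A)" using firm_props[OF A(1)] by blast
    have "(\<integral>s. h s \<partial>\<pi>) \<le> (\<integral>s. vA A s \<partial>\<pi>) + e"
      using A(2) by (intro pop_int_le[OF p St] cA) (auto simp: h, smt (verit))
    also have "\<dots> \<le> (\<integral>s. vA A s \<partial>\<pi>') + e" using F[OF A(1)] by simp
    also have "(\<integral>s. vA A s \<partial>\<pi>') \<le> (\<integral>s. h s \<partial>\<pi>') + 0"
      using A(2) by (intro pop_int_le[OF p' St] cA) (auto simp: h)
    finally show "(\<integral>s. h s \<partial>\<pi>) \<le> (\<integral>s. h s \<partial>\<pi>') + e" by simp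
  qed
qed


lemma convex_on_sumf:
  fixes f :: "'i \<Rightarrow> 'b::real_vector \<Rightarrow> real"
  assumes "finite I" "convex S" "\<And>i. i \<in> I \<Longrightarrow> convex_on S (f i)"
  shows "convex_on S (\<lambda>x. \<Sum>i\<in>I. f i x)"
  using assms(1,3)
proof (induction I rule: finite_induct)
  case empty then show ?case using assms(2) by (simp add: convex_on_const)
next
  case (insert i I) then show ?case by (simp add: convex_on_add)
qed

lemma convex_on_comp_minus: "convex S \<Longrightarrow> convex_on S (\<lambda>x::real^'a::finite. x $ j - (c::real))"
  by (rule convex_onI) (auto simp: algebra_simps)

lemma mps_both_eq:
  fixes \<pi> \<pi>' :: "(real ^ 'a::finite) measure"
  assumes Sb: "S \<in> sets borel" and St: "S \<subseteq> traits"
    and p: "population S \<pi>" and p': "population S \<pi>'"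
    and m1: "mps \<pi> \<pi>'" and m2: "mps \<pi>' \<pi>"
  shows "\<pi> = \<pi>'"
proof -
  have ps: "prob_space \<pi>" "prob_space \<pi>'" using p p' population_def by auto
  have conv_eq: "(\<integral>s. h s \<partial>\<pi>) = (\<integral>s. h s \<partial>\<pi>')"
    if "convex_on traits h" "continuous_on traits h" for h :: "real^'a \<Rightarrow> real"
    using m1 m2 that unfolding mps_def by (meson order_antisym)
  have meq: "measure \<pi> ({..b} \<inter> S) = measure \<pi>' ({..b} \<inter> S)" for b :: "real^'a"
  proof -
    define \<phi> where "\<phi> x = (\<Sum>j\<in>UNIV. max 0 (x $ j - b $ j))" for x :: "real^'a"
    define g where "g n x = max 0 (1 - real n * \<phi> x)" for n :: nat and x
    have \<phi>c: "convex_on traits \<phi>" unfolding \<phi>_def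
      by (intro convex_on_sumf convex_on_max2 convex_on_comp_minus traits_convex)
         (auto simp: convex_on_const traits_convex)
    have \<phi>cont: "continuous_on traits \<phi>" unfolding \<phi>_def by (intro continuous_intros)
    have \<phi>0: "\<phi> x \<ge> 0" for x unfolding \<phi>_def by (intro sum_nonneg) auto
    have H1c: "convex_on traits (\<lambda>x. 1 + max 0 (real n * \<phi> x - 1))" for n
      by (intro convex_on_add convex_on_max2 convex_on_cmul \<phi>c convex_on_diff)
         (auto simp: convex_on_const traits_convex concave_on_def)
    have H2c: "convex_on traits (\<lambda>x. real n * \<phi> x)" for n
      by (intro convex_on_cmul \<phi>c) auto
    have H1cont: "continuous_on traits (\<lambda>x. 1 + max 0 (real n * \<phi> x - 1))" for n
      by (intro continuous_intros \<phi>cont)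
    have H2cont: "continuous_on traits (\<lambda>x. real n * \<phi> x)" for n
      by (intro continuous_intros \<phi>cont)
    have gsplit: "g n = (\<lambda>x. (1 + max 0 (real n * \<phi> x - 1)) - real n * \<phi> x)" for n
      unfolding g_def by (auto simp: fun_eq_iff max_def)
    have gcont: "continuous_on traits (g n)" for n
      unfolding g_def by (intro continuous_intros \<phi>cont)
    have int_eq: "(\<integral>s. g n s \<partial>\<pi>) = (\<integral>s. g n s \<partial>\<pi>')" for n
      unfolding gsplit
      using conv_eq[OF H1c H1cont] conv_eq[OF H2c H2cont]
        pop_integrable[OF p St H1cont] pop_integrable[OF p St H2cont]
        pop_integrable[OF p' St H1cont] pop_integrable[OF p' St H2cont]
      by simp
    have lim: "(\<lambda>n. g n x) \<longlonglongrightarrow> indicator {..b} x" for x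
    proof (cases "x \<le> b")
      case True
      then have "\<phi> x = 0" unfolding \<phi>_def by (auto simp: less_eq_vec_def intro!: sum.neutral)
      then show ?thesis using True by (simp add: g_def)
    next
      case False
      then obtain j where j: "x $ j > b $ j" by (auto simp: less_eq_vec_def not_le)
      have "x $ j - b $ j \<le> \<phi> x" unfolding \<phi>_def
        using member_le_sum[of j UNIV "\<lambda>j. max 0 (x $ j - b $ j)"] by auto
      with j have pos: "\<phi> x > 0" by linarith
      obtain N :: nat where N: "1 / \<phi> x < real N" using reals_Archimedean2 by blast
      have "eventually (\<lambda>n. g n x = indicator {..b} x) sequentially"
        unfolding eventually_sequentially
      proof (intro exI allI impI)
        fix n assume "N \<le> n"
        then have "1 / \<phi> x < real n" using N by linarith
        then have "1 < real n * \<phi> x" using pos by (simp add: field_simps)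
        then show "g n x = indicator {..b} x" using False by (simp add: g_def)
      qed
      then show ?thesis by (rule tendsto_eventually)
    qed
    have conv: "(\<lambda>n. \<integral>s. g n s \<partial>M) \<longlonglongrightarrow> measure M ({..b} \<inter> S)"
      if pM: "population S M" for M
    proof -
      have psM: "prob_space M" using pM population_def by blast
      interpret prob_space M by fact
      have spM: "space M = S" using pop_space[OF pM] .
      have setsM: "sets M = (\<inter>) S ` sets borel"
        using pM unfolding population_def by (simp add: sets_restrict_space)
      have "{..b} \<inter> S \<in> sets M" unfolding setsM by (auto intro!: image_eqI[of _ _ "{..b}"])
      then have im: "(indicator {..b} :: real^'a \<Rightarrow> real) \<in> borel_measurable M"
        by (subst borel_measurable_indicator_iff) (simp add: spM)
      have "(\<lambda>n. \<integral>s. g n s \<partial>M) \<longlonglongrightarrow> (\<integral>s. indicator {..b} s \<partial>M)"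
      proof (rule integral_dominated_convergence[where w="\<lambda>_. 1"])
        show "(indicator {..b} :: real^'a \<Rightarrow> real) \<in> borel_measurable M" by fact
        show "g n \<in> borel_measurable M" for n
          using pop_meas[OF pM continuous_on_subset[OF gcont St]] .
        show "integrable M (\<lambda>_. 1::real)" by simp
        show "AE x in M. (\<lambda>n. g n x) \<longlonglongrightarrow> indicator {..b} x" using lim by simp
        show "AE x in M. norm (g n x) \<le> 1" for n
          using \<phi>0 by (intro AE_I2) (auto simp: g_def mult_nonneg_nonneg)
      qed
      then show ?thesis by (simp add: spM)
    qed
    have c2: "(\<lambda>n. \<integral>s. g n s \<partial>\<pi>) \<longlonglongrightarrow> measure \<pi>' ({..b} \<inter> S)"
      using conv[OF p'] int_eq by simp
    show ?thesis using LIMSEQ_unique[OF conv[OF p] c2] .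
  qed
  define E where "E = (\<inter>) S ` range (\<lambda>b::real^'a. {..b})"
  have sb: "sets (borel :: (real^'a) measure) = sigma_sets UNIV (range (\<lambda>b::real^'a. {..b}))"
    by (subst borel_eq_atMost) (simp add: sets_measure_of)
  have sS: "(\<inter>) S ` sets borel = sigma_sets S E"
    unfolding sb E_def using Sb sb by (intro sigma_sets_Int) auto
  have setsE: "sets \<pi> = sigma_sets S E" "sets \<pi>' = sigma_sets S E"
    using p p' unfolding population_def by (auto simp: sets_restrict_space sS)
  show ?thesis
  proof (rule measure_eqI_generator_eq[OF _ _ _ setsE, where A="\<lambda>_. S"])
    show "Int_stable E" unfolding Int_stable_def E_def
    proof (safe)
      fix a b :: "real^'a"
      have "S \<inter> {..a} \<inter> (S \<inter> {..b}) = S \<inter> {..inf a b}" by (auto simp: le_inf_iff)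
      then show "S \<inter> {..a} \<inter> (S \<inter> {..b}) \<in> (\<inter>) S ` range atMost" by blast
    qed
    show "E \<subseteq> Pow S" unfolding E_def by auto
    show "emeasure \<pi> X = emeasure \<pi>' X" if "X \<in> E" for X
    proof -
      obtain b where X: "X = S \<inter> {..b}" using \<open>X \<in> E\<close> unfolding E_def by auto
      interpret a: prob_space \<pi> by (rule ps(1))
      interpret b: prob_space \<pi>' by (rule ps(2))
      show ?thesis unfolding X using meq[of b]
        by (simp add: a.emeasure_eq_measure b.emeasure_eq_measure Int_commute)
    qed
    have le1: "x \<le> (\<chi> i. 1)" if x: "x \<in> S" for x :: "real^'a"
    proof -
      have xt: "x \<in> traits" using St x by blast
      show ?thesis unfolding less_eq_vec_def using traits_le1[OF xt] by simp
    qed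
    then have "S \<inter> {..(\<chi> i. 1)} = S" by auto
    then show "range (\<lambda>_. S) \<subseteq> E" unfolding E_def by blast
    show "(\<Union>i::nat. S) = S" by simp
    show "emeasure \<pi> S \<noteq> \<infinity>" for i :: nat
      using prob_space.emeasure_space_1[OF ps(1)] pop_space[OF p] by simp
  qed
qed


lemma firm_le_of_mps:
  assumes "mps \<pi>' \<pi>" "firm A"
  shows "(\<integral>s. vA A s \<partial>\<pi>) \<le> (\<integral>s. vA A s \<partial>\<pi>')"
  using assms firm_props[OF assms(2)] unfolding mps_def by blast

lemma not_mps_strict:
  assumes "population S \<pi>" "population S \<pi>'" "S \<subseteq> traits" "\<not> mps \<pi>' \<pi>"
  shows "\<exists>A. firm A \<and> (\<integral>s. vA A s \<partial>\<pi>') < (\<integral>s. vA A s \<partial>\<pi>)"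
  using firms_to_mps[OF assms(1-3)] assms(4) by (meson not_le)

lemma neq_strict:
  fixes \<pi> \<pi>' :: "(real ^ 'a::finite) measure"
  assumes "S \<in> sets borel" "S \<subseteq> traits" "population S \<pi>" "population S \<pi>'" "\<pi> \<noteq> \<pi>'"
  shows "\<exists>A. firm A \<and> (\<integral>s. vA A s \<partial>\<pi>) \<noteq> (\<integral>s. vA A s \<partial>\<pi>')"
proof (rule ccontr)
  assume "\<not> ?thesis"
  then have eq: "\<And>A. firm A \<Longrightarrow> (\<integral>s. vA A s \<partial>\<pi>) = (\<integral>s. vA A s \<partial>\<pi>')" by blast
  have "mps \<pi>' \<pi>" using firms_to_mps[OF assms(3,4,2)] eq by simp
  moreover have "mps \<pi> \<pi>'" using firms_to_mps[OF assms(4,3,2)] eq by simp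
  ultimately show False using mps_both_eq[OF assms(1-4)] assms(5) by blast
qed

theorem corollary1:
  fixes S :: "(real ^ 'a::finite) set"
    and \<pi> \<pi>' :: "(real ^ 'a) measure"
  assumes "S \<in> sets borel" and "S \<subseteq> traits"
    and "population S \<pi>" and "population S \<pi>'"
    and "skill_dist \<pi> = skill_dist \<pi>'"
  shows "(systematic_discrimination \<pi> \<pi>' \<longleftrightarrow> mps \<pi>' \<pi> \<and> \<pi> \<noteq> \<pi>')
       \<and> (unsystematic_discrimination \<pi> \<pi>' \<longleftrightarrow> \<not> mps \<pi> \<pi>' \<and> \<not> mps \<pi>' \<pi>)
       \<and> (no_discrimination \<pi> \<pi>' \<longleftrightarrow> \<pi> = \<pi>')"
proof (intro conjI)
  note defs = systematic_discrimination_def unsystematic_discrimination_def no_discrimination_def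
    discriminates_against_def discriminates_strictly_against_def
  show "systematic_discrimination \<pi> \<pi>' \<longleftrightarrow> mps \<pi>' \<pi> \<and> \<pi> \<noteq> \<pi>'"
  proof
    assume a: "systematic_discrimination \<pi> \<pi>'"
    then have "mps \<pi>' \<pi>" using firms_to_mps[OF assms(3,4,2)] unfolding defs by blast
    moreover have "\<pi> \<noteq> \<pi>'" using a unfolding defs by auto
    ultimately show "mps \<pi>' \<pi> \<and> \<pi> \<noteq> \<pi>'" by blast
  next
    assume a: "mps \<pi>' \<pi> \<and> \<pi> \<noteq> \<pi>'"
    obtain A where A: "firm A" "(\<integral>s. vA A s \<partial>\<pi>) \<noteq> (\<integral>s. vA A s \<partial>\<pi>')"
      using neq_strict[OF assms(1,2,3,4)] a by blast
    have "(\<integral>s. vA A s \<partial>\<pi>) < (\<integral>s. vA A s \<partial>\<pi>')" using A firm_le_of_mps[OF _ A(1)] a by force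
    then show "systematic_discrimination \<pi> \<pi>'" unfolding defs
      using firm_le_of_mps a A(1) by blast
  qed
  show "unsystematic_discrimination \<pi> \<pi>' \<longleftrightarrow> \<not> mps \<pi> \<pi>' \<and> \<not> mps \<pi>' \<pi>"
  proof
    assume "unsystematic_discrimination \<pi> \<pi>'"
    then obtain A A' where "firm A" "firm A'" "(\<integral>s. vA A s \<partial>\<pi>) < (\<integral>s. vA A s \<partial>\<pi>')"
      "(\<integral>s. vA A' s \<partial>\<pi>') < (\<integral>s. vA A' s \<partial>\<pi>)" unfolding defs by blast
    then show "\<not> mps \<pi> \<pi>' \<and> \<not> mps \<pi>' \<pi>" using firm_le_of_mps by (meson not_le)
  next
    assume a: "\<not> mps \<pi> \<pi>' \<and> \<not> mps \<pi>' \<pi>"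
    obtain A where "firm A" "(\<integral>s. vA A s \<partial>\<pi>) < (\<integral>s. vA A s \<partial>\<pi>')"
      using not_mps_strict[OF assms(4,3,2)] a by blast
    moreover obtain A' where "firm A'" "(\<integral>s. vA A' s \<partial>\<pi>') < (\<integral>s. vA A' s \<partial>\<pi>)"
      using not_mps_strict[OF assms(3,4,2)] a by blast
    ultimately show "unsystematic_discrimination \<pi> \<pi>'" unfolding defs by blast
  qed
  show "no_discrimination \<pi> \<pi>' \<longleftrightarrow> \<pi> = \<pi>'"
  proof
    assume nd: "no_discrimination \<pi> \<pi>'"
    show "\<pi> = \<pi>'"
    proof (rule ccontr)
      assume "\<pi> \<noteq> \<pi>'"
      then obtain A where A: "firm A" "(\<integral>s. vA A s \<partial>\<pi>) \<noteq> (\<integral>s. vA A s \<partial>\<pi>')"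
        using neq_strict[OF assms(1,2,3,4)] by blast
      show False
      proof (cases "(\<integral>s. vA A s \<partial>\<pi>) < (\<integral>s. vA A s \<partial>\<pi>')")
        case True
        then show False using nd A(1) unfolding defs by (meson not_le)
      next
        case False
        then have "(\<integral>s. vA A s \<partial>\<pi>') < (\<integral>s. vA A s \<partial>\<pi>)" using A(2) by linarith
        then show False using nd A(1) unfolding defs by (meson not_le)
      qed
    qed
  next
    assume "\<pi> = \<pi>'"
    then show "no_discrimination \<pi> \<pi>'" unfolding defs by auto
  qed
qed

end
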